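(* Let $n\ge1$, $d\ge2$, $t\ge1$, and let $\{h_\alpha\}$ be a finite family of Hermitian operators on $(\mathbb C^d)^{\otimes n}$ each of which satisfies $U^{\otimes n}h_\alpha (U^* )^{\otimes n}=h_\alpha$ for all $U\in U(d)$. Then for every degree-$2t$ pseudo-density matrix $\tilde\rho$ (in particular every density matrix, which is the case $t=n$) there is a degree-$2t$ pseudo-density matrix $\tilde\rho'$ (a density matrix if $\tilde\rho$ is one) such that $\operatorname{tr}(\tilde\rho'\Lambda^a_u)=0$ for all $a\in[d^2-1]$ and $u\in[n]$, and $\operatorname{tr}(\tilde\rho' h_\alpha)=\operatorname{tr}(\tilde\rho h_\alpha)$ for every $\alpha$.
   Context: $\Lambda^1,\dots,\Lambda^{d^2-1}$ are the generalized Gell-Mann matrices ($|a\rangle\langle b|+|b\rangle\langle a|$, $-i|a\rangle\langle b|+i|b\rangle\langle a|$ for $a<b$, and $\sqrt{\frac{2}{a(a+1)}}(\sum_{b\le a}|b\rangle\langle b|-a|a+1\rangle\langle a+1|)$ for $1\le a\le d-1$), and $\Lambda^0=\sqrt{2/d}\,I$. $\Lambda^a_u$ denotes $\Lambda^a$ acting on qudit $u$ tensored with identity elsewhere. The products $\Lambda^{a_1}\otimes\cdots\otimes\Lambda^{a_n}$, $a_i\in\{0,\dots,d^2-1\}$, form a basis of operators on $(\mathbb C^d)^{\otimes n}$; the degree of such a basis element is the number of $i$ with $a_i\ne0$, and the degree of an operator is the maximum degree of basis elements with nonzero coefficient in its expansion. A degree-$2t$ pseudo-density matrix is an operator $\tilde\rho$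 on $(\mathbb C^d)^{\otimes n}$ with $\tilde\rho^*=\tilde\rho$, $\operatorname{tr}\tilde\rho=1$, and $\operatorname{tr}(\tilde\rho A^*A)\ge0$ for every operator $A$ of degree at most $t$. *)

theory Defs
  imports Complex_Main
begin

text \<open>Operators on (C^d)^{\<otimes>n} are represented as complex-valued functions on pairs of
computational-basis words; a word is a list of length n with entries in {0..<d}.
Only the values on words matter.  Single-qudit matrices are functions on {0..<d}^2.\<close>

type_synonym qmat = "nat \<Rightarrow> nat \<Rightarrow> complex"
type_synonym qop = "nat list \<Rightarrow> nat list \<Rightarrow> complex"

definition words :: "nat \<Rightarrow> nat \<Rightarrow> nat list set" where
  "words n d = {xs. length xs = n \<and> (\<forall>x\<in>set xs. x < d)}"

definition op_mult :: "nat \<Rightarrow> nat \<Rightarrow> qop \<Rightarrow> qop \<Rightarrow> qop" where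
  "op_mult n d A B x y = (\<Sum>z\<in>words n d. A x z * B z y)"

definition op_adj :: "qop \<Rightarrow> qop" where
  "op_adj A x y = cnj (A y x)"

definition op_tr :: "nat \<Rightarrow> nat \<Rightarrow> qop \<Rightarrow> complex" where
  "op_tr n d A = (\<Sum>x\<in>words n d. A x x)"

definition op_eq :: "nat \<Rightarrow> nat \<Rightarrow> qop \<Rightarrow> qop \<Rightarrow> bool" where
  "op_eq n d A B \<longleftrightarrow> (\<forall>x\<in>words n d. \<forall>y\<in>words n d. A x y = B x y)"

definition op_hermitian :: "nat \<Rightarrow> nat \<Rightarrow> qop \<Rightarrow> bool" where
  "op_hermitian n d A \<longleftrightarrow> op_eq n d (op_adj A) A"

text \<open>Labels of generalized Gell-Mann matrices (basis states indexed 0..d-1):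
  GSym a b = |a><b| + |b><a|, GAsym a b = -i|a><b| + i|b><a| (a<b<d),
  GDiag a (1 \<le> a \<le> d-1) = sqrt(2/(a(a+1))) (sum_{i<a} |i><i| - a|a><a|)
  (the paper's 1-based formula shifted to 0-based indices), GId = Lambda^0 = sqrt(2/d) I.\<close>

datatype gm = GId | GSym nat nat | GAsym nat nat | GDiag nat

definition gm_valid :: "nat \<Rightarrow> gm \<Rightarrow> bool" where
  "gm_valid d g = (case g of GId \<Rightarrow> True
     | GSym a b \<Rightarrow> a < b \<and> b < d
     | GAsym a b \<Rightarrow> a < b \<and> b < d
     | GDiag a \<Rightarrow> 1 \<le> a \<and> a \<le> d - 1)"

definition gm_mat :: "nat \<Rightarrow> gm \<Rightarrow> qmat" where
  "gm_mat d g i j = (case g of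
       GId \<Rightarrow> (if i = j then complex_of_real (sqrt (2 / real d)) else 0)
     | GSym a b \<Rightarrow> (if (i = a \<and> j = b) \<or> (i = b \<and> j = a) then 1 else 0)
     | GAsym a b \<Rightarrow> (if i = a \<and> j = b then - \<i> else if i = b \<and> j = a then \<i> else 0)
     | GDiag a \<Rightarrow> (if i \<noteq> j then 0 else
          complex_of_real (sqrt (2 / (real a * (real a + 1)))) *
          (if i < a then 1 else if i = a then - of_nat a else 0)))"

definition gm_prod :: "nat \<Rightarrow> gm list \<Rightarrow> qop" where
  "gm_prod d gs x y = (\<Prod>i<length gs. gm_mat d (gs ! i) (x ! i) (y ! i))"

definition gm_degree :: "gm list \<Rightarrow> nat" where
  "gm_degree gs = card {i. i < length gs \<and> gs ! i \<noteq> GId}"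

definition gm_labels :: "nat \<Rightarrow> nat \<Rightarrow> gm list set" where
  "gm_labels n d = {gs. length gs = n \<and> (\<forall>g\<in>set gs. gm_valid d g)}"

definition deg_le :: "nat \<Rightarrow> nat \<Rightarrow> nat \<Rightarrow> qop \<Rightarrow> bool" where
  "deg_le n d t A \<longleftrightarrow> (\<exists>c :: gm list \<Rightarrow> complex.
     op_eq n d A (\<lambda>x y. \<Sum>gs\<in>{gs\<in>gm_labels n d. gm_degree gs \<le> t}. c gs * gm_prod d gs x y))"

definition gm_local :: "nat \<Rightarrow> nat \<Rightarrow> nat \<Rightarrow> gm \<Rightarrow> qop" where
  "gm_local n d u g x y = gm_mat d g (x ! u) (y ! u) *
     (\<Prod>i\<in>{..<n} - {u}. if x ! i = y ! i then 1 else 0)"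

definition pseudo_density :: "nat \<Rightarrow> nat \<Rightarrow> nat \<Rightarrow> qop \<Rightarrow> bool" where
  "pseudo_density n d t \<rho> \<longleftrightarrow> op_hermitian n d \<rho> \<and> op_tr n d \<rho> = 1 \<and>
     (\<forall>A. deg_le n d t A \<longrightarrow>
        (let z = op_tr n d (op_mult n d \<rho> (op_mult n d (op_adj A) A)) in z \<in> \<real> \<and> Re z \<ge> 0))"

definition density_matrix :: "nat \<Rightarrow> nat \<Rightarrow> qop \<Rightarrow> bool" where
  "density_matrix n d \<rho> \<longleftrightarrow> op_hermitian n d \<rho> \<and> op_tr n d \<rho> = 1 \<and>
     (\<forall>v :: nat list \<Rightarrow> complex.
        (let z = (\<Sum>x\<in>words n d. \<Sum>y\<in>words n d. cnj (v x) * \<rho> x y * v y) in z \<in> \<real> \<and> Re z \<ge> 0))"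

definition unitary_mat :: "nat \<Rightarrow> qmat \<Rightarrow> bool" where
  "unitary_mat d U \<longleftrightarrow> (\<forall>i<d. \<forall>j<d. (\<Sum>k<d. cnj (U k i) * U k j) = (if i = j then 1 else 0))"

definition tensor_power :: "nat \<Rightarrow> qmat \<Rightarrow> qop" where
  "tensor_power n U x y = (\<Prod>i<n. U (x ! i) (y ! i))"

definition unitary_invariant :: "nat \<Rightarrow> nat \<Rightarrow> qop \<Rightarrow> bool" where
  "unitary_invariant n d h \<longleftrightarrow> (\<forall>U. unitary_mat d U \<longrightarrow>
     op_eq n d (op_mult n d (op_mult n d (tensor_power n U) h) (op_adj (tensor_power n U))) h)"

end

theory Submission
  imports Defs
begin


lemma finite_words[simp]: "finite (words n d)"
proof -
  have "words n d \<subseteq> {xs. set xs \<subseteq> {..<d} \<and> length xs = n}"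
    unfolding words_def by auto
  moreover have "finite {xs. set xs \<subseteq> {..<d} \<and> length xs = n}"
    by (rule finite_lists_length_eq) simp
  ultimately show ?thesis by (rule finite_subset)
qed

lemma op_mult_assoc:
  "op_mult n d (op_mult n d A B) C x y = op_mult n d A (op_mult n d B C) x y"
  unfolding op_mult_def
  apply (simp add: sum_distrib_left sum_distrib_right mult.assoc)
  apply (rule sum.swap)
  done

lemma op_tr_cyc: "op_tr n d (op_mult n d A B) = op_tr n d (op_mult n d B A)"
  unfolding op_tr_def op_mult_def
  by (subst sum.swap) (simp add: mult.commute)

lemma op_mult_cong_left:
  "op_eq n d A A' \<Longrightarrow> x \<in> words n d \<Longrightarrow> op_mult n d A B x y = op_mult n d A' B x y"
  unfolding op_mult_def op_eq_def by (intro sum.cong) auto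

lemma op_mult_cong_right:
  "op_eq n d B B' \<Longrightarrow> y \<in> words n d \<Longrightarrow> op_mult n d A B x y = op_mult n d A B' x y"
  unfolding op_mult_def op_eq_def by (intro sum.cong) auto

lemma op_tr_cong: "(\<And>x. x \<in> words n d \<Longrightarrow> A x x = B x x) \<Longrightarrow> op_tr n d A = op_tr n d B"
  unfolding op_tr_def by (rule sum.cong) auto

lemma op_tr_conj:
  "op_tr n d (op_mult n d (op_mult n d (op_mult n d V r) (op_adj V)) X)
   = op_tr n d (op_mult n d r (op_mult n d (op_mult n d (op_adj V) X) V))"
proof -
  have "op_tr n d (op_mult n d (op_mult n d (op_mult n d V r) (op_adj V)) X)
      = op_tr n d (op_mult n d (op_mult n d V r) (op_mult n d (op_adj V) X))"
    by (rule op_tr_cong) (simp add: op_mult_assoc)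
  also have "\<dots> = op_tr n d (op_mult n d (op_mult n d (op_adj V) X) (op_mult n d V r))"
    by (rule op_tr_cyc)
  also have "\<dots> = op_tr n d (op_mult n d (op_mult n d (op_mult n d (op_adj V) X) V) r)"
    by (rule op_tr_cong) (simp add: op_mult_assoc)
  also have "\<dots> = op_tr n d (op_mult n d r (op_mult n d (op_mult n d (op_adj V) X) V))"
    by (rule op_tr_cyc)
  finally show ?thesis .
qed

lemma op_mult_sum_left:
  "op_mult n d (\<lambda>x y. c * (\<Sum>a\<in>S. F a x y)) B x y = c * (\<Sum>a\<in>S. op_mult n d (F a) B x y)"
  unfolding op_mult_def
  apply (simp add: sum_distrib_left sum_distrib_right mult.assoc)
  apply (rule sum.swap)
  done

lemma op_mult_sum_right:
  "op_mult n d B (\<lambda>x y. c * (\<Sum>a\<in>S. F a x y)) x y = c * (\<Sum>a\<in>S. op_mult n d B (F a) x y)"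
  unfolding op_mult_def
  apply (simp add: sum_distrib_left sum_distrib_right mult.assoc mult.left_commute)
  apply (rule sum.swap)
  done

lemma op_tr_sum:
  "op_tr n d (\<lambda>x y. c * (\<Sum>a\<in>S. F a x y)) = c * (\<Sum>a\<in>S. op_tr n d (F a))"
  unfolding op_tr_def
  apply (simp add: sum_distrib_left)
  apply (rule sum.swap)
  done

definition lists_of :: "nat \<Rightarrow> 'a set \<Rightarrow> 'a list set" where
  "lists_of n S = {xs. length xs = n \<and> set xs \<subseteq> S}"

lemma lists_of_Suc: "lists_of (Suc n) S = (\<lambda>(k,zs). k # zs) ` (S \<times> lists_of n S)"
  unfolding lists_of_def
  apply (rule set_eqI)
  apply (case_tac x)
   apply auto
  done

lemma finite_lists_of: "finite S \<Longrightarrow> finite (lists_of n S)"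
  unfolding lists_of_def using finite_lists_length_eq[of S n] by (simp add: conj_commute)

lemma sum_prod_lists:
  fixes f :: "nat \<Rightarrow> 'a \<Rightarrow> 'b::comm_semiring_1"
  assumes "finite S"
  shows "(\<Sum>z\<in>lists_of n S. \<Prod>i<n. f i (z!i)) = (\<Prod>i<n. \<Sum>k\<in>S. f i k)"
proof (induction n arbitrary: f)
  case 0
  have "lists_of 0 S = {[]}" by (auto simp: lists_of_def)
  then show ?case by simp
next
  case (Suc n)
  have inj: "inj_on (\<lambda>(k,zs). k # zs) (S \<times> lists_of n S)" by (auto simp: inj_on_def)
  have "(\<Sum>z\<in>lists_of (Suc n) S. \<Prod>i<Suc n. f i (z!i))
      = (\<Sum>p\<in>S \<times> lists_of n S. \<Prod>i<Suc n. f i ((fst p # snd p)!i))"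
    unfolding lists_of_Suc by (subst sum.reindex[OF inj]) (auto intro!: sum.cong simp: case_prod_beta)
  also have "\<dots> = (\<Sum>p\<in>S \<times> lists_of n S. f 0 (fst p) * (\<Prod>i<n. f (Suc i) (snd p ! i)))"
    by (simp only: prod.lessThan_Suc_shift nth_Cons_0 nth_Cons_Suc)
  also have "\<dots> = (\<Sum>k\<in>S. f 0 k) * (\<Sum>zs\<in>lists_of n S. \<Prod>i<n. f (Suc i) (zs ! i))"
    by (simp add: sum_product sum.cartesian_product case_prod_beta)
  also have "\<dots> = (\<Sum>k\<in>S. f 0 k) * (\<Prod>i<n. \<Sum>k\<in>S. f (Suc i) k)"
    using Suc.IH[of "\<lambda>i. f (Suc i)"] by simp
  also have "\<dots> = (\<Prod>i<Suc n. \<Sum>k\<in>S. f i k)"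
    by (simp only: prod.lessThan_Suc_shift)
  finally show ?case .
qed

lemma words_lists_of: "words n d = lists_of n {..<d}"
  unfolding words_def lists_of_def by auto

definition mmult :: "nat \<Rightarrow> qmat \<Rightarrow> qmat \<Rightarrow> qmat" where
  "mmult d P Q i j = (\<Sum>k<d. P i k * Q k j)"

definition madj :: "qmat \<Rightarrow> qmat" where
  "madj P i j = cnj (P j i)"

definition mid :: qmat where
  "mid i j = (if i = j then 1 else 0)"

definition prodop :: "nat \<Rightarrow> (nat \<Rightarrow> qmat) \<Rightarrow> qop" where
  "prodop n M x y = (\<Prod>i<n. M i (x!i) (y!i))"

lemma prodop_mult:
  "op_mult n d (prodop n M) (prodop n N) x y = prodop n (\<lambda>i. mmult d (M i) (N i)) x y"
proof -
  have "op_mult n d (prodop n M) (prodop n N) x y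
      = (\<Sum>z\<in>lists_of n {..<d}. \<Prod>i<n. M i (x!i) (z!i) * N i (z!i) (y!i))"
    unfolding op_mult_def prodop_def words_lists_of by (simp add: prod.distrib)
  also have "\<dots> = (\<Prod>i<n. \<Sum>k\<in>{..<d}. M i (x!i) k * N i k (y!i))"
    by (rule sum_prod_lists[where f="\<lambda>i k. M i (x!i) k * N i k (y!i)"]) simp
  finally show ?thesis unfolding prodop_def mmult_def by simp
qed

lemma prodop_adj: "op_adj (prodop n M) = prodop n (\<lambda>i. madj (M i))"
  unfolding op_adj_def prodop_def madj_def by (intro ext) simp

lemma tensor_power_prodop: "tensor_power n U = prodop n (\<lambda>_. U)"
  unfolding tensor_power_def prodop_def by (intro ext) simp

lemma gm_prod_prodop: "gm_prod d gs = prodop (length gs) (\<lambda>i. gm_mat d (gs!i))"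
  unfolding gm_prod_def prodop_def by (intro ext) simp

lemma prodop_cong:
  assumes "\<And>i p q. i < n \<Longrightarrow> p < d \<Longrightarrow> q < d \<Longrightarrow> M i p q = N i p q"
    and "x \<in> words n d" and "y \<in> words n d"
  shows "prodop n M x y = prodop n N x y"
  unfolding prodop_def
proof (rule prod.cong)
  fix i assume "i \<in> {..<n}"
  then show "M i (x ! i) (y ! i) = N i (x ! i) (y ! i)"
    using assms by (auto simp: words_def)
qed simp

lemma prodop_mid:
  assumes "x \<in> words n d" and "y \<in> words n d"
  shows "prodop n (\<lambda>_. mid) x y = (if x = y then 1 else 0)"
proof -
  have "prodop n (\<lambda>_. mid) x y = (if (\<forall>i\<in>{..<n}. x!i = y!i) then 1 else 0)"
  proof (cases "\<forall>i\<in>{..<n}. x!i = y!i")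
    case True then show ?thesis unfolding prodop_def mid_def by simp
  next
    case False
    then obtain i where "i < n" "x!i \<noteq> y!i" by auto
    then have "(\<Prod>i<n. mid (x ! i) (y ! i)) = 0"
      by (subst prod_zero_iff) (auto simp: mid_def)
    then show ?thesis unfolding prodop_def if_not_P[OF False] .
  qed
  moreover have "(\<forall>i\<in>{..<n}. x!i = y!i) \<longleftrightarrow> x = y"
    using assms by (auto simp: words_def list_eq_iff_nth_eq)
  ultimately show ?thesis by simp
qed



lemma mod_shift_inj:
  assumes "(i::nat) < d" "j < d" "(i + a) mod d = (j + a) mod d" shows "i = j"
proof -
  have *: "i = j" if "i \<le> j" "i < d" "j < d" "(i + a) mod d = (j + a) mod d" for i j :: nat
  proof -
    have "d dvd (j + a) - (i + a)" using that mod_eq_dvd_iff_nat[of "i+a" "j+a" d] by simp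
    then have "d dvd j - i" by simp
    moreover have "j - i < d" using that by simp
    ultimately have "j - i = 0" using dvd_imp_le by (metis gr0I leD)
    then show ?thesis using that by simp
  qed
  show ?thesis
    using *[of i j] *[of j i] assms by (cases "i \<le> j") auto
qed

lemma shift_sum:
  fixes d a :: nat and f :: "nat \<Rightarrow> complex"
  assumes "0 < d"
  shows "(\<Sum>k<d. f ((k + a) mod d)) = (\<Sum>k<d. (f k :: complex))"
proof -
  have inj: "inj_on (\<lambda>k. (k + a) mod d) {..<d}"
    unfolding inj_on_def
  proof (intro ballI impI)
    fix x y assume "x \<in> {..<d}" "y \<in> {..<d}" "(x + a) mod d = (y + a) mod d"
    then show "x = y" using mod_shift_inj[of x d y a] by simp
  qed
  have sub: "(\<lambda>k. (k + a) mod d) ` {..<d} \<subseteq> {..<d}"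
    using assms by auto
  have "(\<lambda>k. (k + a) mod d) ` {..<d} = {..<d}"
    by (rule endo_inj_surj[OF finite_lessThan sub inj])
  then show ?thesis
    using sum.reindex[OF inj, of f] by simp
qed

definition ph :: "nat \<Rightarrow> nat \<Rightarrow> nat \<Rightarrow> complex" where
  "ph d b j = cis (2 * pi * real b * real j / real d)"

definition wey :: "nat \<Rightarrow> nat \<Rightarrow> nat \<Rightarrow> qmat" where
  "wey d a b i j = (if i = (j + a) mod d then ph d b j else 0)"

lemma ph_norm: "cnj (ph d b j) * ph d b j = 1"
  unfolding ph_def by (simp add: cis_cnj cis_mult)

lemma ph_norm': "ph d b j * cnj (ph d b j) = 1"
  using ph_norm[of d b j] by (simp add: mult.commute)

lemma wey_adj_mult:
  assumes "0 < d" "i < d" "j < d"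
  shows "mmult d (madj (wey d a b)) (wey d a b) i j = mid i j"
proof -
  have "mmult d (madj (wey d a b)) (wey d a b) i j
      = (\<Sum>k<d. if k = (i + a) mod d then cnj (ph d b i) * wey d a b k j else 0)"
    unfolding mmult_def madj_def by (intro sum.cong) (auto simp: wey_def)
  also have "\<dots> = cnj (ph d b i) * wey d a b ((i + a) mod d) j"
    using assms by (simp add: sum.delta)
  also have "\<dots> = mid i j"
    using mod_shift_inj[of i d j a] assms ph_norm[of d b j]
    by (auto simp: wey_def mid_def)
  finally show ?thesis .
qed

lemma wey_mult_adj:
  assumes "0 < d" "i < d" "j < d"
  shows "mmult d (wey d a b) (madj (wey d a b)) i j = mid i j"
proof -
  have "mmult d (wey d a b) (madj (wey d a b)) i j
      = (\<Sum>k<d. (\<lambda>m. if i = m \<and> j = m then 1 else 0) ((k + a) mod d))"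
    unfolding mmult_def madj_def
    by (intro sum.cong) (auto simp: wey_def ph_norm')
  also have "\<dots> = (\<Sum>m<d. if i = m \<and> j = m then 1 else 0)"
    by (rule shift_sum[OF assms(1)])
  also have "\<dots> = mid i j"
  proof (cases "i = j")
    case False
    then show ?thesis by (simp add: mid_def) (rule sum.neutral, auto)
  qed (use assms in \<open>simp add: mid_def\<close>)
  finally show ?thesis .
qed

lemma wey_conj:
  assumes "0 < d" "i < d" "j < d"
  shows "mmult d (mmult d (madj (wey d a b)) L) (wey d a b) i j
       = cnj (ph d b i) * ph d b j * L ((i + a) mod d) ((j + a) mod d)"
proof -
  have 1: "mmult d (madj (wey d a b)) L i l = cnj (ph d b i) * L ((i + a) mod d) l" for l
  proof -
    have "mmult d (madj (wey d a b)) L i l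
      = (\<Sum>k<d. if k = (i + a) mod d then cnj (ph d b i) * L k l else 0)"
      unfolding mmult_def madj_def by (intro sum.cong) (auto simp: wey_def)
    also have "\<dots> = cnj (ph d b i) * L ((i + a) mod d) l"
      using assms by (simp add: sum.delta)
    finally show ?thesis .
  qed
  have "mmult d (mmult d (madj (wey d a b)) L) (wey d a b) i j
      = (\<Sum>l<d. if l = (j + a) mod d then cnj (ph d b i) * L ((i + a) mod d) l * ph d b j else 0)"
    unfolding mmult_def[of d "mmult d _ _"] 1 by (intro sum.cong) (auto simp: wey_def)
  also have "\<dots> = cnj (ph d b i) * ph d b j * L ((i + a) mod d) ((j + a) mod d)"
    using assms by (simp add: sum.delta)
  finally show ?thesis .
qed

lemma ph_sum:
  assumes "0 < d" "i < d" "j < d"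
  shows "(\<Sum>b<d. cnj (ph d b i) * ph d b j) = (if i = j then of_nat d else 0)"
proof -
  define z where "z = cis (2 * pi * (real j - real i) / real d)"
  have zb: "cnj (ph d b i) * ph d b j = z ^ b" for b
    unfolding ph_def z_def DeMoivre cis_cnj cis_mult
    by (rule arg_cong[where f=cis]) (use assms in \<open>simp add: field_simps\<close>)
  show ?thesis
  proof (cases "i = j")
    case True
    then show ?thesis using ph_norm by simp
  next
    case False
    have zd: "z ^ d = 1"
    proof -
      have "z ^ d = cis (2 * pi * of_int (int j - int i))"
        unfolding z_def DeMoivre using assms
        by (intro arg_cong[where f=cis]) (simp add: field_simps)
      also have "\<dots> = 1" by (rule cis_multiple_2pi) simp
      finally show ?thesis .
    qed
    have z1: "z \<noteq> 1"
    proof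
      assume "z = 1"
      then have "cos (2 * pi * (real j - real i) / real d) = 1"
        using \<open>z = 1\<close> unfolding z_def by (metis cis.sel(1) one_complex.sel(1))
      then obtain m :: int where m: "2 * pi * (real j - real i) / real d = of_int m * 2 * pi"
        using cos_one_2pi_int by blast
      then have "(2 * pi) * (real j - real i) = (2 * pi) * (of_int m * real d)"
        using assms by (simp add: divide_eq_eq algebra_simps)
      then have "real j - real i = of_int m * real d"
        by (subst (asm) mult_left_cancel) simp_all
      then have "int j - int i = m * int d" by (metis of_int_eq_iff of_int_mult of_int_of_nat_eq of_int_diff)
      moreover have "\<bar>int j - int i\<bar> < int d" using assms by simp
      ultimately have "\<bar>m\<bar> * int d < 1 * int d" by (simp add: abs_mult)
      then have "\<bar>m\<bar> < 1" using assms by (simp only: mult_less_cancel_right)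
      then have "m = 0" by simp
      then show False using \<open>int j - int i = m * int d\<close> False by simp
    qed
    have "(\<Sum>b<d. cnj (ph d b i) * ph d b j) = (\<Sum>b<d. z ^ b)" using zb by simp
    also have "\<dots> = 0" using sum_gp_strict[of z d] zd z1 by simp
    finally show ?thesis using False by simp
  qed
qed

lemma twirl_sum:
  assumes "0 < d" "i < d" "j < d"
  shows "(\<Sum>a<d. \<Sum>b<d. mmult d (mmult d (madj (wey d a b)) L) (wey d a b) i j)
       = (if i = j then of_nat d * (\<Sum>k<d. L k k) else 0)"
proof -
  have "(\<Sum>a<d. \<Sum>b<d. mmult d (mmult d (madj (wey d a b)) L) (wey d a b) i j)
      = (\<Sum>a<d. \<Sum>b<d. cnj (ph d b i) * ph d b j * L ((i + a) mod d) ((j + a) mod d))"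
    by (simp only: wey_conj[OF assms])
  also have "\<dots> = (\<Sum>a<d. (\<Sum>b<d. cnj (ph d b i) * ph d b j) * L ((i + a) mod d) ((j + a) mod d))"
    by (simp only: sum_distrib_right)
  also have "\<dots> = (\<Sum>a<d. (if i = j then of_nat d else 0) * L ((i + a) mod d) ((j + a) mod d))"
    using ph_sum[OF assms] by simp
  also have "\<dots> = (if i = j then of_nat d * (\<Sum>k<d. L k k) else 0)"
  proof (cases "i = j")
    case True
    have "(\<Sum>a<d. L ((j + a) mod d) ((j + a) mod d)) = (\<Sum>k<d. L k k)"
      using shift_sum[OF assms(1), of "\<lambda>k. L k k" j] by (simp add: add.commute)
    then show ?thesis using True by (simp add: sum_distrib_left[symmetric])
  next
    case False
    then show ?thesis by (simp only: if_False mult_zero_left sum.neutral_const)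
  qed
  finally show ?thesis .
qed



lemma aux1:
  fixes S x y n :: complex
  assumes "n \<noteq> 0" "n + 1 \<noteq> 0"
  shows "(S - n * x) / (n * (n + 1)) * 1 + (y - S / n) = y - (S + x) / (n + 1)"
proof -
  have a: "n * inverse n = 1" "(n + 1) * inverse (n + 1) = 1" using assms by simp_all
  show ?thesis unfolding divide_inverse inverse_mult_distrib using a by algebra
qed
lemma aux2:
  fixes S x n :: complex
  assumes "n \<noteq> 0" "n + 1 \<noteq> 0"
  shows "(S - n * x) / (n * (n + 1)) * (- n) + 0 = x - (S + x) / (n + 1)"
proof -
  have a: "n * inverse n = 1" "(n + 1) * inverse (n + 1) = 1" using assms by simp_all
  show ?thesis unfolding divide_inverse inverse_mult_distrib using a by algebra
qed
lemma tele:
  fixes m :: "nat \<Rightarrow> complex"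
  defines "c \<equiv> \<lambda>a. ((\<Sum>i<a. m i) - of_nat a * m a) / (of_nat a * (of_nat a + 1))"
  defines "g \<equiv> \<lambda>a k. (if k < a then 1 else if k = a then - of_nat a else 0) :: complex"
  assumes "1 \<le> N"
  shows "\<forall>k<N. (\<Sum>a\<in>{1..<N}. c a * g a k) = m k - (\<Sum>i<N. m i) / of_nat N"
  using assms(3)
proof (induction N rule: nat_induct_at_least)
  case base
  then show ?case by simp
next
  case (Suc N)
  have ins: "{1..<Suc N} = insert N {1..<N}" using Suc.hyps by auto
  have Nnz: "(of_nat N :: complex) \<noteq> 0" "(of_nat N + 1 :: complex) \<noteq> 0" using Suc.hyps
    by simp (metis add.commute of_nat_Suc of_nat_eq_0_iff nat.distinct(1))
  have Nnz': "(1 + of_nat N :: complex) \<noteq> 0"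
    by (metis Nnz(2) add.commute)
  show ?case
  proof (intro allI impI)
    fix k assume k: "k < Suc N"
    have split: "(\<Sum>a\<in>{1..<Suc N}. c a * g a k) = c N * g N k + (\<Sum>a\<in>{1..<N}. c a * g a k)"
      unfolding ins by (subst sum.insert) auto
    show "(\<Sum>a\<in>{1..<Suc N}. c a * g a k) = m k - (\<Sum>i<Suc N. m i) / of_nat (Suc N)"
    proof (cases "k < N")
      case True
      then have "(\<Sum>a\<in>{1..<N}. c a * g a k) = m k - (\<Sum>i<N. m i) / of_nat N"
        using Suc.IH by blast
      moreover have "g N k = 1" using True by (simp add: g_def)
      ultimately show ?thesis using aux1[OF Nnz, of "\<Sum>i<N. m i" "m N" "m k"] unfolding split
        by (simp add: c_def)
    next
      case False
      then have kN: "k = N" using k by simp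
      have "(\<Sum>a\<in>{1..<N}. c a * g a k) = 0"
        by (rule sum.neutral) (auto simp: g_def kN)
      moreover have "g N k = - of_nat N" using kN by (simp add: g_def)
      ultimately show ?thesis using aux2[OF Nnz, of "\<Sum>i<N. m i" "m N"] kN unfolding split
        by (simp add: c_def)
    qed
  qed
qed

definition gv :: "nat \<Rightarrow> gm set" where "gv d = {g. gm_valid d g}"
definition PP :: "nat \<Rightarrow> (nat \<times> nat) set" where "PP d = {(p,q). p < q \<and> q < d}"

lemma finite_PP: "finite (PP d)"
  by (rule finite_subset[of _ "{..<d} \<times> {..<d}"]) (auto simp: PP_def)

lemma gv_split: "1 \<le> d \<Longrightarrow>
  gv d = insert GId ((\<lambda>(p,q). GSym p q) ` PP d \<union> (\<lambda>(p,q). GAsym p q) ` PP d \<union> GDiag ` {1..<d})"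
  unfolding gv_def PP_def
  apply (rule set_eqI)
  subgoal for g by (cases g) (auto simp: gm_valid_def)
  done

lemma finite_gv: "finite (gv d)"
proof (cases "d = 0")
  case True
  then have "gv d \<subseteq> {GId}" unfolding gv_def by (auto simp: gm_valid_def split: gm.splits)
  then show ?thesis by (rule finite_subset) simp
next
  case False
  then show ?thesis using finite_PP by (simp add: gv_split)
qed

lemma sum_gv:
  assumes "1 \<le> d"
  shows "(\<Sum>g\<in>gv d. F g) = F GId + (\<Sum>x\<in>PP d. F (GSym (fst x) (snd x)))
     + (\<Sum>x\<in>PP d. F (GAsym (fst x) (snd x))) + (\<Sum>a\<in>{1..<d}. F (GDiag a))"
proof -
  have inj1: "inj_on (\<lambda>(p,q). GSym p q) (PP d)" by (auto simp: inj_on_def)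
  have inj2: "inj_on (\<lambda>(p,q). GAsym p q) (PP d)" by (auto simp: inj_on_def)
  have s1: "(\<Sum>g\<in>(\<lambda>(p,q). GSym p q) ` PP d. F g) = (\<Sum>x\<in>PP d. F (GSym (fst x) (snd x)))"
    by (subst sum.reindex[OF inj1]) (simp add: case_prod_beta)
  have s2: "(\<Sum>g\<in>(\<lambda>(p,q). GAsym p q) ` PP d. F g) = (\<Sum>x\<in>PP d. F (GAsym (fst x) (snd x)))"
    by (subst sum.reindex[OF inj2]) (simp add: case_prod_beta)
  have s3: "(\<Sum>g\<in>GDiag ` {1..<d}. F g) = (\<Sum>a\<in>{1..<d}. F (GDiag a))"
    by (subst sum.reindex) (auto simp: inj_on_def)
  let ?A = "(\<lambda>(p,q). GSym p q) ` PP d" and ?B = "(\<lambda>(p,q). GAsym p q) ` PP d"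
    and ?C = "GDiag ` {1..<d}"
  have fA: "finite ?A" and fB: "finite ?B" and fC: "finite ?C" using finite_PP by simp_all
  have n: "GId \<notin> ?A \<union> ?B \<union> ?C" by auto
  have dAB: "?A \<inter> ?B = {}" by auto
  have dABC: "(?A \<union> ?B) \<inter> ?C = {}" by auto
  have "(\<Sum>g\<in>gv d. F g) = F GId + sum F (?A \<union> ?B \<union> ?C)"
    unfolding gv_split[OF assms] using fA fB fC n by (subst sum.insert) auto
  also have "sum F (?A \<union> ?B \<union> ?C) = sum F (?A \<union> ?B) + sum F ?C"
    using fA fB fC dABC by (simp only: sum.union_disjoint finite_UnI)
  also have "sum F (?A \<union> ?B) = sum F ?A + sum F ?B"
    using fA fB dAB by (simp only: sum.union_disjoint)
  finally show ?thesis by (simp only: s1 s2 s3 add.assoc)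
qed

lemma sum_PP_single:
  assumes "(i, j) \<in> PP d" "\<And>x. x \<in> PP d \<Longrightarrow> x \<noteq> (i, j) \<Longrightarrow> G x = (0::complex)"
  shows "sum G (PP d) = G (i, j)"
proof -
  have "sum G (PP d) = G (i, j) + sum G (PP d - {(i, j)})"
    using assms(1) finite_PP by (rule sum.remove[rotated])
  also have "sum G (PP d - {(i, j)}) = 0"
    using assms(2) by (intro sum.neutral) auto
  finally show ?thesis by simp
qed

definition csq :: "nat \<Rightarrow> complex" where "csq d = complex_of_real (sqrt (2 / real d))"
definition sd :: "nat \<Rightarrow> complex" where
  "sd a = complex_of_real (sqrt (2 / (real a * (real a + 1))))"

definition coef :: "nat \<Rightarrow> qmat \<Rightarrow> gm \<Rightarrow> complex" where
  "coef d M g = (case g of GId \<Rightarrow> (\<Sum>k<d. M k k) / (of_nat d * csq d)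
     | GSym p q \<Rightarrow> (M p q + M q p) / 2
     | GAsym p q \<Rightarrow> \<i> * (M p q - M q p) / 2
     | GDiag a \<Rightarrow> ((\<Sum>i<a. M i i) - of_nat a * M a a) / (of_nat a * (of_nat a + 1)) / sd a)"

lemma gm_mat_GId: "gm_mat d GId i j = (if i = j then csq d else 0)"
  unfolding gm_mat_def csq_def by simp
lemma gm_mat_GSym: "gm_mat d (GSym p q) i j = (if (i = p \<and> j = q) \<or> (i = q \<and> j = p) then 1 else 0)"
  unfolding gm_mat_def by simp
lemma gm_mat_GAsym: "gm_mat d (GAsym p q) i j = (if i = p \<and> j = q then - \<i> else if i = q \<and> j = p then \<i> else 0)"
  unfolding gm_mat_def by simp
lemma gm_mat_GDiag: "gm_mat d (GDiag a) i j = (if i \<noteq> j then 0 else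
          sd a * (if i < a then 1 else if i = a then - of_nat a else 0))"
  unfolding gm_mat_def sd_def by simp

lemma completeness:
  assumes "1 \<le> d" "i < d" "j < d"
  shows "M i j = (\<Sum>g\<in>gv d. coef d M g * gm_mat d g i j)"
proof -
  let ?F = "\<lambda>g. coef d M g * gm_mat d g i j"
  have csq0: "csq d \<noteq> 0" using assms unfolding csq_def by simp
  have d0: "(of_nat d :: complex) \<noteq> 0" using assms by simp
  have T0: "?F GId = (if i = j then (\<Sum>k<d. M k k) / of_nat d else 0)"
    using csq0 d0 by (simp add: coef_def gm_mat_GId)
  have T3: "(\<Sum>a\<in>{1..<d}. ?F (GDiag a)) = (if i = j then M i i - (\<Sum>k<d. M k k) / of_nat d else 0)"
  proof (cases "i = j")
    case True
    have sd0: "sd a \<noteq> 0" if "a \<in> {1..<d}" for a using that unfolding sd_def by simp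
    have "(\<Sum>a\<in>{1..<d}. ?F (GDiag a)) = (\<Sum>a\<in>{1..<d}.
       ((\<Sum>i<a. M i i) - of_nat a * M a a) / (of_nat a * (of_nat a + 1)) *
       (if i < a then 1 else if i = a then - of_nat a else 0))"
      using True sd0 by (intro sum.cong refl) (simp add: coef_def gm_mat_GDiag)
    also have "\<dots> = M i i - (\<Sum>k<d. M k k) / of_nat d"
      using tele[of d "\<lambda>k. M k k"] assms by simp
    finally show ?thesis using True by simp
  next
    case False
    then show ?thesis by (simp add: gm_mat_GDiag)
  qed
  have T12: "(\<Sum>x\<in>PP d. ?F (GSym (fst x) (snd x))) + (\<Sum>x\<in>PP d. ?F (GAsym (fst x) (snd x)))
        = (if i = j then 0 else M i j)"
  proof (cases "i < j")
    case True
    have "(\<Sum>x\<in>PP d. ?F (GSym (fst x) (snd x))) = (\<lambda>x. ?F (GSym (fst x) (snd x))) (i, j)"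
      by (rule sum_PP_single) (use True assms in \<open>auto simp: PP_def gm_mat_GSym\<close>)
    moreover have "(\<Sum>x\<in>PP d. ?F (GAsym (fst x) (snd x))) = (\<lambda>x. ?F (GAsym (fst x) (snd x))) (i, j)"
      by (rule sum_PP_single) (use True assms in \<open>auto simp: PP_def gm_mat_GAsym\<close>)
    moreover have "?F (GSym i j) + ?F (GAsym i j) = M i j"
      using True by (simp add: coef_def gm_mat_GSym gm_mat_GAsym field_simps)
    ultimately show ?thesis using True by (simp only: if_False) simp
  next
    case False
    show ?thesis
    proof (cases "j < i")
      case True
      have "(\<Sum>x\<in>PP d. ?F (GSym (fst x) (snd x))) = (\<lambda>x. ?F (GSym (fst x) (snd x))) (j, i)"
        by (rule sum_PP_single) (use True assms in \<open>auto simp: PP_def gm_mat_GSym\<close>)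
      moreover have "(\<Sum>x\<in>PP d. ?F (GAsym (fst x) (snd x))) = (\<lambda>x. ?F (GAsym (fst x) (snd x))) (j, i)"
        by (rule sum_PP_single) (use True assms in \<open>auto simp: PP_def gm_mat_GAsym\<close>)
      moreover have "?F (GSym j i) + ?F (GAsym j i) = M i j"
        using True by (simp add: coef_def gm_mat_GSym gm_mat_GAsym field_simps)
      ultimately show ?thesis using True by (simp only: if_False) simp
    next
      case False2: False
      then have ij: "i = j" using False by simp
      have "(\<Sum>x\<in>PP d. ?F (GSym (fst x) (snd x))) = 0"
        by (rule sum.neutral) (auto simp: PP_def gm_mat_GSym ij)
      moreover have "(\<Sum>x\<in>PP d. ?F (GAsym (fst x) (snd x))) = 0"
        by (rule sum.neutral) (auto simp: PP_def gm_mat_GAsym ij)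
      ultimately show ?thesis using ij by simp
    qed
  qed
  show ?thesis
    unfolding sum_gv[OF assms(1)] using T0 T3 T12
    by (cases "i = j") (simp_all add: add.assoc)
qed



lemma gm_trace0:
  assumes "gm_valid d g" "g \<noteq> GId"
  shows "(\<Sum>k<d. gm_mat d g k k) = 0"
proof (cases g)
  case GId then show ?thesis using assms by simp
next
  case (GSym p q) then show ?thesis using assms by (auto simp: gm_mat_GSym gm_valid_def intro!: sum.neutral)
next
  case (GAsym p q) then show ?thesis using assms by (auto simp: gm_mat_GAsym gm_valid_def intro!: sum.neutral)
next
  case (GDiag a)
  then have a: "1 \<le> a" "a < d" using assms by (auto simp: gm_valid_def)
  have "(\<Sum>k<d. gm_mat d g k k) = sd a * (\<Sum>k<d. (if k < a then 1 else if k = a then - of_nat a else 0))"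
    unfolding GDiag gm_mat_GDiag by (simp add: sum_distrib_left)
  also have "(\<Sum>k<d. (if k < a then 1 else if k = a then - of_nat a else 0) :: complex)
     = (\<Sum>k<d. (if k < a then 1 else 0)) + (\<Sum>k<d. (if k = a then - of_nat a else 0))"
    by (subst sum.distrib[symmetric]) (rule sum.cong, auto)
  also have "(\<Sum>k<d. (if k < a then 1 else 0 :: complex)) = of_nat a"
  proof -
    have "{k. k < d \<and> k < a} = {..<a}" using a by auto
    then show ?thesis by (simp add: sum.If_cases[where A="{..<d}"] Int_def)
  qed
  also have "(\<Sum>k<d. (if k = a then - of_nat a else 0 :: complex)) = - of_nat a"
    using a by (simp add: sum.delta)
  finally show ?thesis by simp
qed

definition Qm :: "nat \<Rightarrow> nat \<Rightarrow> nat \<Rightarrow> gm \<Rightarrow> qmat" where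
  "Qm d a b g = mmult d (mmult d (madj (wey d a b)) (gm_mat d g)) (wey d a b)"

definition fco :: "nat \<Rightarrow> nat \<Rightarrow> nat \<Rightarrow> gm \<Rightarrow> gm \<Rightarrow> complex" where
  "fco d a b g = (if g = GId then (\<lambda>h. if h = GId then 1 else 0) else coef d (Qm d a b g))"

lemma Qm_trace:
  assumes "0 < d"
  shows "(\<Sum>i<d. Qm d a b g i i) = (\<Sum>k<d. gm_mat d g k k)"
proof -
  have "(\<Sum>i<d. Qm d a b g i i) = (\<Sum>i<d. gm_mat d g ((i + a) mod d) ((i + a) mod d))"
    unfolding Qm_def using assms by (intro sum.cong refl) (simp add: wey_conj ph_norm)
  also have "\<dots> = (\<Sum>k<d. gm_mat d g k k)"
    by (rule shift_sum[OF assms, of "\<lambda>k. gm_mat d g k k"])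
  finally show ?thesis .
qed

lemma Qm_expand:
  assumes "1 \<le> d" "gm_valid d g" "i < d" "j < d"
  shows "Qm d a b g i j = (\<Sum>h\<in>gv d. fco d a b g h * gm_mat d h i j)"
proof (cases "g = GId")
  case True
  have "Qm d a b g i j = gm_mat d GId i j"
    unfolding Qm_def True using assms mod_shift_inj[of i d j a]
    by (simp add: wey_conj gm_mat_GId ph_norm)
  also have "\<dots> = (\<Sum>h\<in>gv d. (if h = GId then 1 else 0) * gm_mat d h i j)"
  proof -
    have "GId \<in> gv d" by (simp add: gv_def gm_valid_def)
    then show ?thesis by (simp add: if_distrib[of "\<lambda>x. x * _"] sum.delta finite_gv cong: if_cong)
  qed
  finally show ?thesis using True by (simp add: fco_def)
next
  case False
  then show ?thesis using completeness[OF assms(1,3,4), of "Qm d a b g"] by (simp add: fco_def)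
qed

lemma fco_GId:
  assumes "1 \<le> d" "gm_valid d g" "g \<noteq> GId"
  shows "fco d a b g GId = 0"
  using assms Qm_trace[of d a b g] gm_trace0[OF assms(2,3)] by (simp add: fco_def coef_def)

lemma gm_labels_lists_of: "gm_labels n d = lists_of n (gv d)"
  unfolding gm_labels_def lists_of_def gv_def by auto

lemma prodop_expand:
  assumes "finite S"
  shows "prodop n (\<lambda>i p q. \<Sum>h\<in>S. F i h * gm_mat d h p q) x y
       = (\<Sum>hs\<in>lists_of n S. (\<Prod>i<n. F i (hs!i)) * gm_prod d hs x y)"
proof -
  have "prodop n (\<lambda>i p q. \<Sum>h\<in>S. F i h * gm_mat d h p q) x y
      = (\<Prod>i<n. \<Sum>h\<in>S. F i h * gm_mat d h (x!i) (y!i))"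
    unfolding prodop_def by simp
  also have "\<dots> = (\<Sum>hs\<in>lists_of n S. \<Prod>i<n. F i (hs!i) * gm_mat d (hs!i) (x!i) (y!i))"
    by (rule sum_prod_lists[OF assms, symmetric])
  also have "\<dots> = (\<Sum>hs\<in>lists_of n S. (\<Prod>i<n. F i (hs!i)) * gm_prod d hs x y)"
    by (intro sum.cong refl) (auto simp: prod.distrib gm_prod_def lists_of_def)
  finally show ?thesis .
qed

lemma op_mult_lin_right:
  "op_mult n d B (\<lambda>x y. \<Sum>a\<in>S. k a * F a x y) x y = (\<Sum>a\<in>S. k a * op_mult n d B (F a) x y)"
  unfolding op_mult_def
  apply (simp add: sum_distrib_left sum_distrib_right mult.assoc mult.left_commute)
  apply (rule sum.swap)
  done

lemma op_mult_lin_left: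
  "op_mult n d (\<lambda>x y. \<Sum>a\<in>S. k a * F a x y) B x y = (\<Sum>a\<in>S. k a * op_mult n d (F a) B x y)"
  unfolding op_mult_def
  apply (simp add: sum_distrib_left sum_distrib_right mult.assoc)
  apply (rule sum.swap)
  done

lemma conj_prodop:
  "op_mult n d (op_mult n d (op_adj (tensor_power n W)) (prodop n M)) (tensor_power n W)
   = prodop n (\<lambda>i. mmult d (mmult d (madj W) (M i)) W)"
  unfolding tensor_power_prodop prodop_adj
  by (intro ext) (simp add: prodop_mult[symmetric] op_mult_def)

lemma degree_zero:
  assumes gs: "gs \<in> gm_labels n d" "gm_degree gs \<le> t"
    and hs: "hs \<in> gm_labels n d" "\<not> gm_degree hs \<le> t"
    and f0: "\<And>h. h \<noteq> GId \<Longrightarrow> F GId h = (0::complex)"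
  shows "(\<Prod>i<n. F (gs!i) (hs!i)) = 0"
proof -
  have len: "length gs = n" "length hs = n" using gs hs by (auto simp: gm_labels_def)
  have "\<exists>i<n. gs!i = GId \<and> hs!i \<noteq> GId"
  proof (rule ccontr)
    assume "\<not> ?thesis"
    then have "{i. i < length hs \<and> hs!i \<noteq> GId} \<subseteq> {i. i < length gs \<and> gs!i \<noteq> GId}"
      using len by auto
    then have "gm_degree hs \<le> gm_degree gs"
      unfolding gm_degree_def by (rule card_mono[rotated]) simp
    then show False using gs hs by simp
  qed
  then obtain i where "i < n" "gs!i = GId" "hs!i \<noteq> GId" by blast
  then have "F (gs!i) (hs!i) = 0" using f0 by simp
  then show ?thesis using \<open>i < n\<close> by (subst prod_zero_iff) auto
qed

lemma finite_gm_labels: "finite (gm_labels n d)"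
  unfolding gm_labels_lists_of by (rule finite_lists_of[OF finite_gv])

lemma deg_le_conj:
  assumes d1: "1 \<le> d" and A: "deg_le n d t A"
  shows "deg_le n d t (op_mult n d (op_mult n d (op_adj (tensor_power n (wey d a b))) A) (tensor_power n (wey d a b)))"
proof -
  define V where "V = tensor_power n (wey d a b)"
  define Lt where "Lt = {gs\<in>gm_labels n d. gm_degree gs \<le> t}"
  obtain c where c: "op_eq n d A (\<lambda>x y. \<Sum>gs\<in>Lt. c gs * gm_prod d gs x y)"
    using A unfolding deg_le_def Lt_def by blast
  define A0 where "A0 = (\<lambda>x y. \<Sum>gs\<in>Lt. c gs * gm_prod d gs x y)"
  define E where "E gs hs = (\<Prod>i<n. fco d a b (gs!i) (hs!i))" for gs hs
  have finLt: "finite Lt" unfolding Lt_def using finite_gm_labels by simp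
  have step3: "op_mult n d (op_mult n d (op_adj V) (gm_prod d gs)) V x y
      = (\<Sum>hs\<in>Lt. E gs hs * gm_prod d hs x y)"
    if gs: "gs \<in> Lt" and x: "x \<in> words n d" and y: "y \<in> words n d" for gs x y
  proof -
    have len: "length gs = n" and val: "\<And>i. i < n \<Longrightarrow> gm_valid d (gs!i)"
      using gs by (auto simp: Lt_def gm_labels_def)
    have "op_mult n d (op_mult n d (op_adj V) (gm_prod d gs)) V x y
        = prodop n (\<lambda>i. Qm d a b (gs!i)) x y"
      unfolding V_def gm_prod_prodop len conj_prodop Qm_def by simp
    also have "\<dots> = prodop n (\<lambda>i p q. \<Sum>h\<in>gv d. fco d a b (gs!i) h * gm_mat d h p q) x y"
      by (rule prodop_cong[OF _ x y]) (simp add: Qm_expand[OF d1 val])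
    also have "\<dots> = (\<Sum>hs\<in>gm_labels n d. E gs hs * gm_prod d hs x y)"
      unfolding prodop_expand[OF finite_gv] E_def gm_labels_lists_of ..
    also have "\<dots> = (\<Sum>hs\<in>Lt. E gs hs * gm_prod d hs x y)"
    proof (rule sum.mono_neutral_right[OF finite_gm_labels])
      show "Lt \<subseteq> gm_labels n d" unfolding Lt_def by auto
      show "\<forall>hs\<in>gm_labels n d - Lt. E gs hs * gm_prod d hs x y = 0"
      proof
        fix hs assume hs: "hs \<in> gm_labels n d - Lt"
        have "E gs hs = 0" unfolding E_def
          by (rule degree_zero[where t=t and d=d])
             (use gs hs in \<open>auto simp: Lt_def fco_def\<close>)
        then show "E gs hs * gm_prod d hs x y = 0" by simp
      qed
    qed
    finally show ?thesis .
  qed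
  have main: "op_mult n d (op_mult n d (op_adj V) A) V x y
       = (\<Sum>hs\<in>Lt. (\<Sum>gs\<in>Lt. c gs * E gs hs) * gm_prod d hs x y)"
    if x: "x \<in> words n d" and y: "y \<in> words n d" for x y
  proof -
    have e1: "op_eq n d (op_mult n d (op_adj V) A) (op_mult n d (op_adj V) A0)"
      unfolding op_eq_def A0_def using op_mult_cong_right[OF c] by blast
    have "op_mult n d (op_mult n d (op_adj V) A) V x y = op_mult n d (op_mult n d (op_adj V) A0) V x y"
      by (rule op_mult_cong_left[OF e1 x])
    also have "op_mult n d (op_adj V) A0 = (\<lambda>x y. \<Sum>gs\<in>Lt. c gs * op_mult n d (op_adj V) (gm_prod d gs) x y)"
      unfolding A0_def by (intro ext) (rule op_mult_lin_right)
    also have "op_mult n d \<dots> V x y = (\<Sum>gs\<in>Lt. c gs * op_mult n d (op_mult n d (op_adj V) (gm_prod d gs)) V x y)"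
      by (rule op_mult_lin_left)
    also have "\<dots> = (\<Sum>gs\<in>Lt. c gs * (\<Sum>hs\<in>Lt. E gs hs * gm_prod d hs x y))"
      using step3 x y by simp
    also have "\<dots> = (\<Sum>hs\<in>Lt. (\<Sum>gs\<in>Lt. c gs * E gs hs) * gm_prod d hs x y)"
      unfolding sum_distrib_left sum_distrib_right mult.assoc by (rule sum.swap)
    finally show ?thesis .
  qed
  show ?thesis
    unfolding V_def[symmetric] deg_le_def
    by (rule exI[where x="\<lambda>hs. \<Sum>gs\<in>Lt. c gs * E gs hs"]) (use main in \<open>simp add: op_eq_def Lt_def\<close>)
qed



definition idop :: qop where "idop x y = (if x = y then 1 else 0)"

lemma op_eq_refl: "op_eq n d A A" by (simp add: op_eq_def)
lemma op_eq_sym: "op_eq n d A B \<Longrightarrow> op_eq n d B A" by (simp add: op_eq_def)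
lemma op_eq_trans: "op_eq n d A B \<Longrightarrow> op_eq n d B C \<Longrightarrow> op_eq n d A C" by (simp add: op_eq_def)
lemma op_eq_mult: "op_eq n d A A' \<Longrightarrow> op_eq n d B B' \<Longrightarrow> op_eq n d (op_mult n d A B) (op_mult n d A' B')"
  unfolding op_eq_def using op_mult_cong_left op_mult_cong_right unfolding op_eq_def by metis
lemma op_eq_assoc: "op_eq n d (op_mult n d (op_mult n d A B) C) (op_mult n d A (op_mult n d B C))"
  by (simp add: op_eq_def op_mult_assoc)
lemma op_eq_idl: "op_eq n d (op_mult n d idop A) A"
  unfolding op_eq_def op_mult_def idop_def by (simp add: if_distrib[of "\<lambda>x. x * _"] cong: if_cong)
lemma op_eq_idr: "op_eq n d (op_mult n d A idop) A"
  unfolding op_eq_def op_mult_def idop_def by (simp add: if_distrib[of "\<lambda>x. _ * x"] cong: if_cong)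

lemma op_adj_mult: "op_adj (op_mult n d A B) = op_mult n d (op_adj B) (op_adj A)"
  unfolding op_adj_def op_mult_def by (intro ext) (simp add: mult.commute)
lemma op_adj_adj: "op_adj (op_adj A) = A"
  unfolding op_adj_def by simp

lemma wey_unitary: "0 < d \<Longrightarrow> unitary_mat d (wey d a b)"
  unfolding unitary_mat_def using wey_adj_mult[of d _ _ a b]
  by (simp add: mmult_def madj_def mid_def)

lemma VadjV:
  assumes "0 < d"
  shows "op_eq n d (op_mult n d (op_adj (tensor_power n (wey d a b))) (tensor_power n (wey d a b))) idop"
  unfolding op_eq_def
proof (intro ballI)
  fix x y assume x: "x \<in> words n d" and y: "y \<in> words n d"
  have "op_mult n d (op_adj (tensor_power n (wey d a b))) (tensor_power n (wey d a b)) x y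
      = prodop n (\<lambda>_. mmult d (madj (wey d a b)) (wey d a b)) x y"
    unfolding tensor_power_prodop prodop_adj prodop_mult ..
  also have "\<dots> = prodop n (\<lambda>_. mid) x y"
    by (rule prodop_cong[OF _ x y]) (simp add: wey_adj_mult assms)
  finally show "op_mult n d (op_adj (tensor_power n (wey d a b))) (tensor_power n (wey d a b)) x y = idop x y"
    using prodop_mid[OF x y] by (simp add: idop_def)
qed

lemma VVadj:
  assumes "0 < d"
  shows "op_eq n d (op_mult n d (tensor_power n (wey d a b)) (op_adj (tensor_power n (wey d a b)))) idop"
  unfolding op_eq_def
proof (intro ballI)
  fix x y assume x: "x \<in> words n d" and y: "y \<in> words n d"
  have "op_mult n d (tensor_power n (wey d a b)) (op_adj (tensor_power n (wey d a b))) x y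
      = prodop n (\<lambda>_. mmult d (wey d a b) (madj (wey d a b))) x y"
    unfolding tensor_power_prodop prodop_adj prodop_mult ..
  also have "\<dots> = prodop n (\<lambda>_. mid) x y"
    by (rule prodop_cong[OF _ x y]) (simp add: wey_mult_adj assms)
  finally show "op_mult n d (tensor_power n (wey d a b)) (op_adj (tensor_power n (wey d a b))) x y = idop x y"
    using prodop_mid[OF x y] by (simp add: idop_def)
qed

lemma op_tr_eq: "op_eq n d A B \<Longrightarrow> op_tr n d (op_mult n d R A) = op_tr n d (op_mult n d R B)"
  by (rule op_tr_cong) (rule op_mult_cong_right)



lemma conj_herm:
  assumes "op_hermitian n d r" "x \<in> words n d" "y \<in> words n d"
  shows "cnj (op_mult n d (op_mult n d V r) (op_adj V) y x) = op_mult n d (op_mult n d V r) (op_adj V) x y"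
proof -
  have h: "cnj (r u w) = r w u" if "u \<in> words n d" "w \<in> words n d" for u w
    using assms(1) that unfolding op_hermitian_def op_eq_def op_adj_def by (metis complex_cnj_cnj)
  have "cnj (op_mult n d (op_mult n d V r) (op_adj V) y x)
      = (\<Sum>w\<in>words n d. \<Sum>u\<in>words n d. cnj (V y u) * cnj (r u w) * V x w)"
    unfolding op_mult_def op_adj_def by (simp add: sum_distrib_right)
  also have "\<dots> = (\<Sum>w\<in>words n d. \<Sum>u\<in>words n d. cnj (V y u) * r w u * V x w)"
    using h by (intro sum.cong refl) simp
  also have "\<dots> = (\<Sum>u\<in>words n d. \<Sum>w\<in>words n d. cnj (V y u) * r w u * V x w)"
    by (rule sum.swap)
  also have "\<dots> = op_mult n d (op_mult n d V r) (op_adj V) x y"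
    unfolding op_mult_def op_adj_def
    by (simp add: sum_distrib_left sum_distrib_right ac_simps)
  finally show ?thesis .
qed

lemma swap4:
  "(\<Sum>x\<in>A. \<Sum>y\<in>B. \<Sum>w\<in>C. \<Sum>u\<in>D. T x y w u) = (\<Sum>u\<in>D. \<Sum>w\<in>C. \<Sum>x\<in>A. \<Sum>y\<in>B. (T x y w u :: complex))"
proof -
  have "(\<Sum>x\<in>A. \<Sum>y\<in>B. \<Sum>w\<in>C. \<Sum>u\<in>D. T x y w u) = (\<Sum>x\<in>A. \<Sum>y\<in>B. \<Sum>u\<in>D. \<Sum>w\<in>C. T x y w u)"
    by (rule sum.cong[OF refl], rule sum.cong[OF refl], rule sum.swap)
  also have "\<dots> = (\<Sum>x\<in>A. \<Sum>u\<in>D. \<Sum>y\<in>B. \<Sum>w\<in>C. T x y w u)"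
    by (rule sum.cong[OF refl], rule sum.swap)
  also have "\<dots> = (\<Sum>u\<in>D. \<Sum>x\<in>A. \<Sum>y\<in>B. \<Sum>w\<in>C. T x y w u)"
    by (rule sum.swap)
  also have "\<dots> = (\<Sum>u\<in>D. \<Sum>x\<in>A. \<Sum>w\<in>C. \<Sum>y\<in>B. T x y w u)"
    by (rule sum.cong[OF refl], rule sum.cong[OF refl], rule sum.swap)
  also have "\<dots> = (\<Sum>u\<in>D. \<Sum>w\<in>C. \<Sum>x\<in>A. \<Sum>y\<in>B. T x y w u)"
    by (rule sum.cong[OF refl], rule sum.swap)
  finally show ?thesis .
qed

lemma quad:
  "(\<Sum>x\<in>words n d. \<Sum>y\<in>words n d. cnj (v x) * op_mult n d (op_mult n d V r) (op_adj V) x y * v y)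
   = (\<Sum>u\<in>words n d. \<Sum>w\<in>words n d. cnj (\<Sum>x\<in>words n d. cnj (V x u) * v x) * r u w *
        (\<Sum>y\<in>words n d. cnj (V y w) * v y))"
proof -
  have "(\<Sum>x\<in>words n d. \<Sum>y\<in>words n d. cnj (v x) * op_mult n d (op_mult n d V r) (op_adj V) x y * v y)
      = (\<Sum>x\<in>words n d. \<Sum>y\<in>words n d. \<Sum>w\<in>words n d. \<Sum>u\<in>words n d.
           cnj (v x) * V x u * r u w * cnj (V y w) * v y)"
    unfolding op_mult_def op_adj_def
    by (simp add: sum_distrib_left sum_distrib_right mult.assoc)
  also have "\<dots> = (\<Sum>u\<in>words n d. \<Sum>w\<in>words n d. \<Sum>x\<in>words n d. \<Sum>y\<in>words n d.
           cnj (v x) * V x u * r u w * cnj (V y w) * v y)"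
    by (rule swap4)
  also have "\<dots> = (\<Sum>u\<in>words n d. \<Sum>w\<in>words n d. cnj (\<Sum>x\<in>words n d. cnj (V x u) * v x) * r u w *
        (\<Sum>y\<in>words n d. cnj (V y w) * v y))"
    by (simp add: sum_distrib_left sum_distrib_right mult.assoc mult.commute mult.left_commute)
  finally show ?thesis .
qed



definition Vp :: "nat \<Rightarrow> nat \<Rightarrow> nat \<times> nat \<Rightarrow> qop" where
  "Vp n d p = tensor_power n (wey d (fst p) (snd p))"

definition rhoT :: "nat \<Rightarrow> nat \<Rightarrow> qop \<Rightarrow> qop" where
  "rhoT n d r = (\<lambda>x y. (1 / of_nat (d * d)) *
     (\<Sum>p\<in>{..<d} \<times> {..<d}. op_mult n d (op_mult n d (Vp n d p) r) (op_adj (Vp n d p)) x y))"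

lemma tr_rhoT:
  "op_tr n d (op_mult n d (rhoT n d r) X) = (1 / of_nat (d * d)) *
     (\<Sum>p\<in>{..<d} \<times> {..<d}. op_tr n d (op_mult n d r (op_mult n d (op_mult n d (op_adj (Vp n d p)) X) (Vp n d p))))"
proof -
  have "op_mult n d (rhoT n d r) X = (\<lambda>x y. (1 / of_nat (d * d)) *
     (\<Sum>p\<in>{..<d} \<times> {..<d}. op_mult n d (op_mult n d (op_mult n d (Vp n d p) r) (op_adj (Vp n d p))) X x y))"
    unfolding rhoT_def by (intro ext) (rule op_mult_sum_left)
  then show ?thesis by (simp only: op_tr_sum op_tr_conj)
qed

lemma chainB:
  fixes n d a b :: nat and B :: qop
  assumes "0 < d"
  defines "V \<equiv> tensor_power n (wey d a b)"
  shows "op_eq n d (op_mult n d (op_mult n d (op_adj V) (op_mult n d (op_adj B) B)) V)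
     (op_mult n d (op_adj (op_mult n d (op_mult n d (op_adj V) B) V)) (op_mult n d (op_mult n d (op_adj V) B) V))"
proof -
  let ?Vs = "op_adj V" and ?Bs = "op_adj B"
  have adjG: "op_adj (op_mult n d (op_mult n d ?Vs B) V) = op_mult n d ?Vs (op_mult n d ?Bs V)"
    by (simp add: op_adj_mult op_adj_adj)
  have VVs: "op_eq n d (op_mult n d V ?Vs) idop" unfolding V_def by (rule VVadj[OF assms(1)])
  have e1: "op_eq n d (op_mult n d V (op_mult n d ?Vs B)) B"
    by (rule op_eq_trans[OF op_eq_sym[OF op_eq_assoc]],
        rule op_eq_trans[OF op_eq_mult[OF VVs op_eq_refl]], rule op_eq_idl)
  have e2: "op_eq n d (op_mult n d V (op_mult n d (op_mult n d ?Vs B) V)) (op_mult n d B V)"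
    by (rule op_eq_trans[OF op_eq_sym[OF op_eq_assoc]], rule op_eq_mult[OF e1 op_eq_refl])
  have e3: "op_eq n d (op_mult n d (op_mult n d ?Bs V) (op_mult n d (op_mult n d ?Vs B) V))
                      (op_mult n d (op_mult n d ?Bs B) V)"
    by (rule op_eq_trans[OF op_eq_assoc], rule op_eq_trans[OF op_eq_mult[OF op_eq_refl e2]],
        rule op_eq_sym[OF op_eq_assoc])
  have e4: "op_eq n d (op_mult n d (op_mult n d ?Vs (op_mult n d ?Bs V)) (op_mult n d (op_mult n d ?Vs B) V))
       (op_mult n d (op_mult n d ?Vs (op_mult n d ?Bs B)) V)"
    by (rule op_eq_trans[OF op_eq_assoc], rule op_eq_trans[OF op_eq_mult[OF op_eq_refl e3]],
        rule op_eq_sym[OF op_eq_assoc])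
  show ?thesis unfolding adjG by (rule op_eq_sym[OF e4])
qed

lemma chainH:
  fixes n d a b :: nat and h :: qop
  assumes "0 < d"
  defines "V \<equiv> tensor_power n (wey d a b)"
  assumes inv: "op_eq n d (op_mult n d (op_mult n d V h) (op_adj V)) h"
  shows "op_eq n d (op_mult n d (op_mult n d (op_adj V) h) V) h"
proof -
  let ?Vs = "op_adj V"
  have VsV: "op_eq n d (op_mult n d ?Vs V) idop" unfolding V_def by (rule VadjV[OF assms(1)])
  have e1: "op_eq n d (op_mult n d (op_mult n d (op_mult n d V h) ?Vs) V) (op_mult n d V h)"
    by (rule op_eq_trans[OF op_eq_assoc], rule op_eq_trans[OF op_eq_mult[OF op_eq_refl VsV]],
        rule op_eq_idr)
  have e2: "op_eq n d (op_mult n d (op_mult n d ?Vs (op_mult n d (op_mult n d V h) ?Vs)) V) h"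
    by (rule op_eq_trans[OF op_eq_assoc], rule op_eq_trans[OF op_eq_mult[OF op_eq_refl e1]],
        rule op_eq_trans[OF op_eq_sym[OF op_eq_assoc]],
        rule op_eq_trans[OF op_eq_mult[OF VsV op_eq_refl]], rule op_eq_idl)
  show ?thesis
    by (rule op_eq_trans[OF op_eq_mult[OF op_eq_mult[OF op_eq_refl op_eq_sym[OF inv]] op_eq_refl] e2])
qed

lemma conj_mid:
  assumes "0 < d" "i < d" "j < d"
  shows "mmult d (mmult d (madj (wey d a b)) mid) (wey d a b) i j = mid i j"
  using assms mod_shift_inj[of i d j a] by (simp add: wey_conj mid_def ph_norm)

lemma gm_local_prodop:
  assumes "u < n"
  shows "gm_local n d u g = prodop n (\<lambda>i. if i = u then gm_mat d g else mid)"
proof (intro ext)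
  fix x y
  have "prodop n (\<lambda>i. if i = u then gm_mat d g else mid) x y
     = gm_mat d g (x!u) (y!u) * (\<Prod>i\<in>{..<n} - {u}. (if i = u then gm_mat d g else mid) (x!i) (y!i))"
    unfolding prodop_def using assms by (subst prod.remove[of _ u]) auto
  also have "(\<Prod>i\<in>{..<n} - {u}. (if i = u then gm_mat d g else mid) (x!i) (y!i))
      = (\<Prod>i\<in>{..<n} - {u}. if x ! i = y ! i then 1 else 0)"
    by (rule prod.cong) (auto simp: mid_def)
  finally show "gm_local n d u g x y = prodop n (\<lambda>i. if i = u then gm_mat d g else mid) x y"
    unfolding gm_local_def by simp
qed

lemma local_sum_zero:
  assumes d: "0 < d" and u: "u < n" and g: "gm_valid d g" "g \<noteq> GId"
    and x: "x \<in> words n d" and y: "y \<in> words n d"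
  shows "(\<Sum>p\<in>{..<d} \<times> {..<d}. op_mult n d (op_mult n d (op_adj (Vp n d p)) (gm_local n d u g)) (Vp n d p) x y) = 0"
proof -
  define R where "R = (\<Prod>i\<in>{..<n} - {u}. mid (x!i) (y!i))"
  have xu: "x!u < d" "y!u < d" using x y u by (auto simp: words_def)
  have one: "op_mult n d (op_mult n d (op_adj (Vp n d p)) (gm_local n d u g)) (Vp n d p) x y
      = mmult d (mmult d (madj (wey d (fst p) (snd p))) (gm_mat d g)) (wey d (fst p) (snd p)) (x!u) (y!u) * R" for p
  proof -
    let ?W = "wey d (fst p) (snd p)"
    have "op_mult n d (op_mult n d (op_adj (Vp n d p)) (gm_local n d u g)) (Vp n d p) x y
       = prodop n (\<lambda>i. mmult d (mmult d (madj ?W) (if i = u then gm_mat d g else mid)) ?W) x y"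
      unfolding Vp_def gm_local_prodop[OF u] conj_prodop ..
    also have "\<dots> = mmult d (mmult d (madj ?W) (gm_mat d g)) ?W (x!u) (y!u) *
        (\<Prod>i\<in>{..<n} - {u}. mmult d (mmult d (madj ?W) (if i = u then gm_mat d g else mid)) ?W (x!i) (y!i))"
      unfolding prodop_def using u by (subst prod.remove[of _ u]) auto
    also have "(\<Prod>i\<in>{..<n} - {u}. mmult d (mmult d (madj ?W) (if i = u then gm_mat d g else mid)) ?W (x!i) (y!i)) = R"
      unfolding R_def
    proof (rule prod.cong[OF refl])
      fix i assume i: "i \<in> {..<n} - {u}"
      then have "x!i < d" "y!i < d" using x y by (auto simp: words_def)
      then show "mmult d (mmult d (madj ?W) (if i = u then gm_mat d g else mid)) ?W (x!i) (y!i) = mid (x!i) (y!i)"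
        using i conj_mid[OF d] by auto
    qed
    finally show ?thesis .
  qed
  have "(\<Sum>p\<in>{..<d} \<times> {..<d}. op_mult n d (op_mult n d (op_adj (Vp n d p)) (gm_local n d u g)) (Vp n d p) x y)
     = (\<Sum>p\<in>{..<d} \<times> {..<d}. mmult d (mmult d (madj (wey d (fst p) (snd p))) (gm_mat d g)) (wey d (fst p) (snd p)) (x!u) (y!u)) * R"
    unfolding one sum_distrib_right ..
  also have "(\<Sum>p\<in>{..<d} \<times> {..<d}. mmult d (mmult d (madj (wey d (fst p) (snd p))) (gm_mat d g)) (wey d (fst p) (snd p)) (x!u) (y!u))
     = (\<Sum>a<d. \<Sum>b<d. mmult d (mmult d (madj (wey d a b)) (gm_mat d g)) (wey d a b) (x!u) (y!u))"
    by (simp add: sum.cartesian_product case_prod_beta)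
  also have "\<dots> = 0"
    using twirl_sum[OF d xu, of "gm_mat d g"] gm_trace0[OF g] by simp
  finally show ?thesis by simp
qed



lemma nonneg_avg:
  assumes "\<And>p. p \<in> S \<Longrightarrow> w p \<in> \<real> \<and> Re (w p) \<ge> 0"
  shows "(1 / of_nat k :: complex) * (\<Sum>p\<in>S. w p) \<in> \<real> \<and> Re ((1 / of_nat k :: complex) * (\<Sum>p\<in>S. w p)) \<ge> 0"
proof
  show "(1 / of_nat k :: complex) * (\<Sum>p\<in>S. w p) \<in> \<real>"
    using assms by (intro Reals_mult sum_in_Reals) auto
  have "Re ((1 / of_nat k :: complex) * (\<Sum>p\<in>S. w p)) = (1 / real k) * (\<Sum>p\<in>S. Re (w p))"
    by (simp add: Re_sum)
  also have "\<dots> \<ge> 0" using assms by (intro mult_nonneg_nonneg sum_nonneg) auto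
  finally show "Re ((1 / of_nat k :: complex) * (\<Sum>p\<in>S. w p)) \<ge> 0" .
qed

lemma tr_idr: "op_tr n d A = op_tr n d (op_mult n d A idop)"
  by (rule op_tr_cong) (use op_eq_idr in \<open>auto simp: op_eq_def\<close>)

lemma rhoT_herm:
  assumes "op_hermitian n d r"
  shows "op_hermitian n d (rhoT n d r)"
  unfolding op_hermitian_def op_eq_def
proof (intro ballI)
  fix x y assume x: "x \<in> words n d" and y: "y \<in> words n d"
  show "op_adj (rhoT n d r) x y = rhoT n d r x y"
  proof -
    have "op_adj (rhoT n d r) x y = cnj (rhoT n d r y x)" by (simp add: op_adj_def)
    also have "\<dots> = rhoT n d r x y"
      unfolding rhoT_def using conj_herm[OF assms x y] by simp
    finally show ?thesis .
  qed
qed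

lemma rhoT_tr:
  assumes "0 < d" "op_tr n d r = 1"
  shows "op_tr n d (rhoT n d r) = 1"
proof -
  have one: "op_tr n d (op_mult n d (op_mult n d (Vp n d p) r) (op_adj (Vp n d p))) = 1" for p
  proof -
    have "op_tr n d (op_mult n d (op_mult n d (Vp n d p) r) (op_adj (Vp n d p)))
        = op_tr n d (op_mult n d (op_mult n d (op_mult n d (Vp n d p) r) (op_adj (Vp n d p))) idop)"
      by (rule tr_idr)
    also have "\<dots> = op_tr n d (op_mult n d r (op_mult n d (op_mult n d (op_adj (Vp n d p)) idop) (Vp n d p)))"
      by (rule op_tr_conj)
    also have "\<dots> = op_tr n d (op_mult n d r idop)"
      by (rule op_tr_eq, rule op_eq_trans[OF op_eq_mult[OF op_eq_idr op_eq_refl]])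
         (unfold Vp_def, rule VadjV[OF assms(1)])
    also have "\<dots> = 1" using assms(2) tr_idr[of n d r] by simp
    finally show ?thesis .
  qed
  have "op_tr n d (rhoT n d r) = (1 / of_nat (d * d)) * (\<Sum>p\<in>{..<d} \<times> {..<d}. 1)"
    unfolding rhoT_def op_tr_sum one ..
  also have "\<dots> = 1" using assms(1) by simp
  finally show ?thesis .
qed



theorem mainTheorem14:
  fixes n d t :: nat and I :: "'i set" and h :: "'i \<Rightarrow> qop" and \<rho> :: qop
  assumes "n \<ge> 1" and "d \<ge> 2" and "t \<ge> 1"
    and "finite I"
    and "\<And>\<alpha>. \<alpha> \<in> I \<Longrightarrow> op_hermitian n d (h \<alpha>)"
    and "\<And>\<alpha>. \<alpha> \<in> I \<Longrightarrow> unitary_invariant n d (h \<alpha>)"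
    and "pseudo_density n d t \<rho>"
  shows "\<exists>\<rho>'. pseudo_density n d t \<rho>' \<and>
           (density_matrix n d \<rho> \<longrightarrow> density_matrix n d \<rho>') \<and>
           (\<forall>g u. gm_valid d g \<and> g \<noteq> GId \<and> u < n \<longrightarrow>
                  op_tr n d (op_mult n d \<rho>' (gm_local n d u g)) = 0) \<and>
           (\<forall>\<alpha>\<in>I. op_tr n d (op_mult n d \<rho>' (h \<alpha>)) = op_tr n d (op_mult n d \<rho> (h \<alpha>)))"
proof -
  have d0: "0 < d" and d1: "1 \<le> d" using assms(2) by auto
  let ?r = "rhoT n d \<rho>"
  let ?c = "1 / of_nat (d * d) :: complex"
  let ?P = "{..<d} \<times> {..<d}"
  have herm: "op_hermitian n d \<rho>" and tr1: "op_tr n d \<rho> = 1"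
    and psd: "\<And>A. deg_le n d t A \<Longrightarrow>
        (let z = op_tr n d (op_mult n d \<rho> (op_mult n d (op_adj A) A)) in z \<in> \<real> \<and> Re z \<ge> 0)"
    using assms(7) unfolding pseudo_density_def by auto
  have herm': "op_hermitian n d ?r" by (rule rhoT_herm[OF herm])
  have tr1': "op_tr n d ?r = 1" by (rule rhoT_tr[OF d0 tr1])
  have cP: "?c * (\<Sum>p\<in>?P. z) = z" for z :: complex
    using d0 by simp
  have pd': "pseudo_density n d t ?r"
    unfolding pseudo_density_def Let_def
  proof (intro conjI herm' tr1' allI impI)
    fix A assume A: "deg_le n d t A"
    define G where "G p = op_mult n d (op_mult n d (op_adj (Vp n d p)) A) (Vp n d p)" for p
    have w: "op_tr n d (op_mult n d \<rho> (op_mult n d (op_mult n d (op_adj (Vp n d p)) (op_mult n d (op_adj A) A)) (Vp n d p)))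
        = op_tr n d (op_mult n d \<rho> (op_mult n d (op_adj (G p)) (G p)))" for p
      unfolding G_def Vp_def by (rule op_tr_eq, rule chainB[OF d0])
    have wp: "op_tr n d (op_mult n d \<rho> (op_mult n d (op_adj (G p)) (G p))) \<in> \<real> \<and>
              Re (op_tr n d (op_mult n d \<rho> (op_mult n d (op_adj (G p)) (G p)))) \<ge> 0" for p
    proof -
      have "deg_le n d t (G p)" unfolding G_def Vp_def by (rule deg_le_conj[OF d1 A])
      then show ?thesis using psd unfolding Let_def by blast
    qed
    have avg: "?c * (\<Sum>p\<in>?P. op_tr n d (op_mult n d \<rho> (op_mult n d (op_adj (G p)) (G p)))) \<in> \<real> \<and>
       0 \<le> Re (?c * (\<Sum>p\<in>?P. op_tr n d (op_mult n d \<rho> (op_mult n d (op_adj (G p)) (G p)))))"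
      by (rule nonneg_avg, rule wp)
    show "op_tr n d (op_mult n d ?r (op_mult n d (op_adj A) A)) \<in> \<real>"
      unfolding tr_rhoT w using avg by blast
    show "0 \<le> Re (op_tr n d (op_mult n d ?r (op_mult n d (op_adj A) A)))"
      unfolding tr_rhoT w using avg by blast
  qed
  have dm': "density_matrix n d ?r" if dm: "density_matrix n d \<rho>"
    unfolding density_matrix_def Let_def
  proof (intro conjI herm' tr1' allI)
    fix v :: "nat list \<Rightarrow> complex"
    define C where "C p = op_mult n d (op_mult n d (Vp n d p) \<rho>) (op_adj (Vp n d p))" for p
    define w where "w p = (\<Sum>x\<in>words n d. \<Sum>y\<in>words n d. cnj (v x) * C p x y * v y)" for p
    have sumeq: "(\<Sum>x\<in>words n d. \<Sum>y\<in>words n d. cnj (v x) * ?r x y * v y) = ?c * (\<Sum>p\<in>?P. w p)"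
    proof -
      define T where "T x y p = cnj (v x) * C p x y * v y" for x y p
      have e1: "cnj (v x) * ?r x y * v y = ?c * (\<Sum>p\<in>?P. T x y p)" for x y
        unfolding rhoT_def T_def C_def by (simp add: sum_distrib_left sum_distrib_right ac_simps)
      have s: "(\<Sum>x\<in>words n d. \<Sum>y\<in>words n d. \<Sum>p\<in>?P. T x y p)
             = (\<Sum>p\<in>?P. \<Sum>x\<in>words n d. \<Sum>y\<in>words n d. T x y p)"
      proof -
        have "(\<Sum>x\<in>words n d. \<Sum>y\<in>words n d. \<Sum>p\<in>?P. T x y p)
            = (\<Sum>x\<in>words n d. \<Sum>p\<in>?P. \<Sum>y\<in>words n d. T x y p)"
          by (rule sum.cong[OF refl], rule sum.swap)
        also have "\<dots> = (\<Sum>p\<in>?P. \<Sum>x\<in>words n d. \<Sum>y\<in>words n d. T x y p)"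
          by (rule sum.swap)
        finally show ?thesis .
      qed
      have "(\<Sum>x\<in>words n d. \<Sum>y\<in>words n d. cnj (v x) * ?r x y * v y)
          = (\<Sum>x\<in>words n d. \<Sum>y\<in>words n d. ?c * (\<Sum>p\<in>?P. T x y p))"
        by (simp only: e1)
      also have "\<dots> = ?c * (\<Sum>x\<in>words n d. \<Sum>y\<in>words n d. \<Sum>p\<in>?P. T x y p)"
        by (simp only: sum_distrib_left)
      also have "\<dots> = ?c * (\<Sum>p\<in>?P. \<Sum>x\<in>words n d. \<Sum>y\<in>words n d. T x y p)"
        by (simp only: s)
      also have "\<dots> = ?c * (\<Sum>p\<in>?P. w p)"
        unfolding w_def T_def ..
      finally show ?thesis .
    qed
    have wp: "w p \<in> \<real> \<and> Re (w p) \<ge> 0" for p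
    proof -
      define v' where "v' u = (\<Sum>x\<in>words n d. cnj (Vp n d p x u) * v x)" for u
      have "w p = (\<Sum>u\<in>words n d. \<Sum>w\<in>words n d. cnj (v' u) * \<rho> u w * v' w)"
        unfolding w_def C_def v'_def by (rule quad)
      moreover have "\<forall>v. (\<Sum>x\<in>words n d. \<Sum>y\<in>words n d. cnj (v x) * \<rho> x y * v y) \<in> \<real> \<and>
          0 \<le> Re (\<Sum>x\<in>words n d. \<Sum>y\<in>words n d. cnj (v x) * \<rho> x y * v y)"
        using dm unfolding density_matrix_def Let_def by blast
      ultimately show ?thesis by (simp only:)
    qed
    have avg: "?c * (\<Sum>p\<in>?P. w p) \<in> \<real> \<and> 0 \<le> Re (?c * (\<Sum>p\<in>?P. w p))"
      by (rule nonneg_avg, rule wp)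
    show "(\<Sum>x\<in>words n d. \<Sum>y\<in>words n d. cnj (v x) * ?r x y * v y) \<in> \<real>"
      unfolding sumeq using avg by blast
    show "0 \<le> Re (\<Sum>x\<in>words n d. \<Sum>y\<in>words n d. cnj (v x) * ?r x y * v y)"
      unfolding sumeq using avg by blast
  qed
  have loc: "op_tr n d (op_mult n d ?r (gm_local n d u g)) = 0"
    if g: "gm_valid d g" "g \<noteq> GId" and u: "u < n" for g u
  proof -
    define X where "X p = op_mult n d (op_mult n d (op_adj (Vp n d p)) (gm_local n d u g)) (Vp n d p)" for p
    have "(\<Sum>p\<in>?P. op_tr n d (op_mult n d \<rho> (X p)))
        = op_tr n d (\<lambda>x y. 1 * (\<Sum>p\<in>?P. op_mult n d \<rho> (X p) x y))"
      by (simp only: op_tr_sum) simp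
    also have "(\<lambda>x y. 1 * (\<Sum>p\<in>?P. op_mult n d \<rho> (X p) x y))
        = op_mult n d \<rho> (\<lambda>x y. 1 * (\<Sum>p\<in>?P. X p x y))"
      by (intro ext) (simp only: op_mult_sum_right)
    also have "op_tr n d (op_mult n d \<rho> (\<lambda>x y. 1 * (\<Sum>p\<in>?P. X p x y)))
        = op_tr n d (op_mult n d \<rho> (\<lambda>x y. 0))"
      by (rule op_tr_eq) (use local_sum_zero[OF d0 u g] in \<open>simp add: op_eq_def X_def\<close>)
    also have "\<dots> = 0" by (simp add: op_tr_def op_mult_def)
    finally have "(\<Sum>p\<in>?P. op_tr n d (op_mult n d \<rho> (X p))) = 0" .
    then show ?thesis unfolding tr_rhoT X_def by simp
  qed
  have hh: "op_tr n d (op_mult n d ?r (h \<alpha>)) = op_tr n d (op_mult n d \<rho> (h \<alpha>))" if a: "\<alpha> \<in> I" for \<alpha>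
  proof -
    have "op_tr n d (op_mult n d \<rho> (op_mult n d (op_mult n d (op_adj (Vp n d p)) (h \<alpha>)) (Vp n d p)))
        = op_tr n d (op_mult n d \<rho> (h \<alpha>))" for p
    proof (rule op_tr_eq)
      have inv: "op_eq n d (op_mult n d (op_mult n d (tensor_power n (wey d (fst p) (snd p))) (h \<alpha>))
                   (op_adj (tensor_power n (wey d (fst p) (snd p))))) (h \<alpha>)"
        using assms(6)[OF a] wey_unitary[OF d0] unfolding unitary_invariant_def by blast
      show "op_eq n d (op_mult n d (op_mult n d (op_adj (Vp n d p)) (h \<alpha>)) (Vp n d p)) (h \<alpha>)"
        unfolding Vp_def by (rule chainH[OF d0 inv])
    qed
    then show ?thesis unfolding tr_rhoT using cP by simp
  qed
  show ?thesis
    by (rule exI[where x="?r"]) (use pd' dm' loc hh in blast)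
qed


end
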